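(* Let $R$ be a commutative ring, $C=(c_{ij})_{i,j=1}^n$ a matrix with entries in $R$, and ${\bf a}=(a_i)_{i=1}^n$, ${\bf b}=(b_i)_{i=1}^n$ vectors with entries in $R$. Then $$\det({\bf a}{\bf b}^{\mathrm T}-C)=\det(-C)+\sum_{\vec G}(-1)^{\#(\text{cycles of }\vec G)}\,b_{s(\vec G)}\,a_{t(\vec G)}\prod_{ij\in E(\vec G)}c_{ij},$$ where the sum runs over all directed graphs $\vec G$ on the vertex set $\{1,\ldots,n\}$ in which one connected component is a directed path (possibly of length $0$, i.e. an isolated vertex) from a source $s(\vec G)$ to a sink $t(\vec G)$ and all other connected components are directed cycles (possibly of length $1$, i.e. a loop $ii$).
   Context: In a directed graph, $ij\in E(\vec G)$ denotes a directed edge from $i$ to $j$ (a loop $ii$ contributes $c_{ii}$). Every vertex of $\{1,\ldots,n\}$ belongs to exactly one component of $\vec G$. The determinant is $\det A=\sum_{\pi}\mathrm{sgn}(\pi)\prod_i a_{i\pi(i)}$. *)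

theory Defs
  imports "HOL-Analysis.Analysis"
begin

text \<open>A directed graph on the (finite) vertex set UNIV of a finite type is given by its
edge set E; a pair (i,j) in E is the directed edge ij (a pair (i,i) is a loop).\<close>

definition dcomponents :: "'v set \<Rightarrow> ('v \<times> 'v) set \<Rightarrow> 'v set set" where
  "dcomponents V E = (\<lambda>v. {w \<in> V. (v, w) \<in> (E \<union> E\<inverse>)\<^sup>*}) ` V"

definition is_dpath :: "'v set \<Rightarrow> ('v \<times> 'v) set \<Rightarrow> 'v \<Rightarrow> 'v \<Rightarrow> bool" where
  "is_dpath V E s t \<longleftrightarrow> (\<exists>vs. vs \<noteq> [] \<and> distinct vs \<and> set vs = V \<and> hd vs = s \<and> last vs = t \<and>
      E = {(vs ! k, vs ! Suc k) | k. Suc k < length vs})"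

text \<open>(V, E) is a directed cycle (length 1 allowed: a single vertex with a loop).\<close>
definition is_dcycle :: "'v set \<Rightarrow> ('v \<times> 'v) set \<Rightarrow> bool" where
  "is_dcycle V E \<longleftrightarrow> (\<exists>vs. vs \<noteq> [] \<and> distinct vs \<and> set vs = V \<and>
      E = {(vs ! k, vs ! (Suc k mod length vs)) | k. k < length vs})"

definition path_cycles_graph :: "('v \<times> 'v) set \<Rightarrow> 'v \<Rightarrow> 'v \<Rightarrow> bool" where
  "path_cycles_graph E s t \<longleftrightarrow>
     (\<exists>P \<in> dcomponents UNIV E. is_dpath P (E \<inter> P \<times> P) s t \<and>
        (\<forall>Q \<in> dcomponents UNIV E - {P}. is_dcycle Q (E \<inter> Q \<times> Q)))"

definition num_cycles :: "('v \<times> 'v) set \<Rightarrow> nat" where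
  "num_cycles E = card {Q \<in> dcomponents UNIV E. is_dcycle Q (E \<inter> Q \<times> Q)}"

end

theory Submission
  imports Defs "HOL-Combinatorics.Cycles"
begin


definition cls :: "('a \<Rightarrow> 'a) \<Rightarrow> 'a \<Rightarrow> 'a set" where
  "cls p x = range (\<lambda>i. (p ^^ i) x)"

lemma cls_funpow: "(p ^^ i) x \<in> cls p x"
  unfolding cls_def by (rule rangeI)

lemma cls_self: "x \<in> cls p x"
  using cls_funpow[where p=p and i=0 and x=x] by simp

lemma cls_step: "p x \<in> cls p x"
  using cls_funpow[where p=p and i=1 and x=x] by simp

lemma cls_E: assumes "y \<in> cls p x" obtains i where "y = (p ^^ i) x"
  using assms unfolding cls_def by blast

lemma funpow_add_apply: "(p ^^ j) ((p ^^ i) x) = (p ^^ (j + i)) x"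
  by (simp add: funpow_add)

lemma cls_sub: assumes "y \<in> cls p x" shows "cls p y \<subseteq> cls p x"
proof
  fix z assume "z \<in> cls p y"
  then obtain j where z: "z = (p ^^ j) y" by (rule cls_E)
  obtain i where y: "y = (p ^^ i) x" using assms by (rule cls_E)
  have "z = (p ^^ (j + i)) x" unfolding z y by (rule funpow_add_apply)
  then show "z \<in> cls p x" by (simp add: cls_funpow)
qed

lemma cls_back: assumes "permutation p" "y \<in> cls p x" shows "x \<in> cls p y"
proof -
  obtain i where y: "y = (p ^^ i) x" using assms(2) by (rule cls_E)
  define L where "L = least_power p x"
  have L: "L > 0" using least_power_of_permutation(2)[OF assms(1)] L_def by simp
  have Li: "(p ^^ (L * i)) x = x" using least_power_dvd[OF assms(1), of x "L * i"] L_def by simp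
  have e: "L * i - i + i = L * i" using L by (simp add: mult_eq_if)
  have "(p ^^ (L*i - i)) y = (p ^^ (L * i - i + i)) x" unfolding y by (rule funpow_add_apply)
  also have "\<dots> = x" unfolding e by (rule Li)
  finally have "x = (p ^^ (L*i - i)) y" by simp
  then show ?thesis by (simp add: cls_funpow)
qed

lemma cls_eq: assumes "permutation p" "y \<in> cls p x" shows "cls p y = cls p x"
proof
  show "cls p y \<subseteq> cls p x" by (rule cls_sub[OF assms(2)])
  show "cls p x \<subseteq> cls p y" by (rule cls_sub[OF cls_back[OF assms]])
qed

lemma cls_inter: assumes "permutation p" "z \<in> cls p x" "z \<in> cls p y" shows "cls p x = cls p y"
proof -
  have "cls p z = cls p x" by (rule cls_eq[OF assms(1,2)])
  moreover have "cls p z = cls p y" by (rule cls_eq[OF assms(1,3)])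
  ultimately show ?thesis by simp
qed

lemma cls_closed: assumes "y \<in> cls p x" shows "p y \<in> cls p x"
  using cls_sub[OF assms] cls_step[of p y] by blast

lemma cls_closed_rev: assumes "permutation p" "p y \<in> cls p x" shows "y \<in> cls p x"
proof -
  have "y \<in> cls p (p y)" using cls_back[OF assms(1) cls_step] .
  then show ?thesis using cls_sub[OF assms(2)] by blast
qed

lemma cls_bounded: assumes "permutation p"
  shows "cls p x = {(p ^^ j) x | j. j < least_power p x}"
proof -
  have L: "least_power p x > 0" "(p ^^ least_power p x) x = x"
    using least_power_of_permutation[OF assms(1)] by auto
  show ?thesis
  proof
    show "cls p x \<subseteq> {(p ^^ j) x | j. j < least_power p x}"
    proof
      fix z assume "z \<in> cls p x"
      then obtain i where i: "z = (p ^^ i) x" by (rule cls_E)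
      have "(p ^^ (i mod least_power p x)) x = (p ^^ i) x"
        by (rule funpow_mod_eq[where f=p and n="least_power p x" and x=x and m=i]) (rule L(2))
      then have "z = (p ^^ (i mod least_power p x)) x" using i by simp
      moreover have "i mod least_power p x < least_power p x" using L(1) by simp
      ultimately show "z \<in> {(p ^^ j) x | j. j < least_power p x}" by blast
    qed
    show "{(p ^^ j) x | j. j < least_power p x} \<subseteq> cls p x" by (auto simp: cls_funpow)
  qed
qed

lemma lp_distinct: assumes "permutation p" "i < j" "j < least_power p x"
  shows "(p ^^ i) x \<noteq> (p ^^ j) x"
proof
  assume eq: "(p ^^ i) x = (p ^^ j) x"
  have "inj p" using assms(1) permutation_bijective bij_is_inj by blast
  then have "(p ^^ (j - i)) x = x" using funpow_diff[of p i j x] eq assms(2) by simp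
  moreover have "0 < j - i" using assms(2) by simp
  ultimately have "least_power p x \<le> j - i" by (rule least_power_le)
  then show False using assms by simp
qed

lemma cls_id: "cls id x = {x}"
  unfolding cls_def by auto

lemma card_range_cls_le: fixes p :: "'a::finite \<Rightarrow> 'a" shows "card (range (cls p)) \<le> CARD('a)"
  using card_image_le[of "UNIV::'a set" "cls p"] by simp

lemma sign_step:
  fixes p :: "'a::finite \<Rightarrow> 'a"
  assumes perm: "permutation p" and px: "p x \<noteq> x"
  defines "q \<equiv> Transposition.transpose x (p x) \<circ> p"
  shows "range (cls q) = (range (cls p) - {cls p x}) \<union> {{x}, cls p x - {x}}"
    and "{y. q y \<noteq> y} \<subset> {y. p y \<noteq> y}"
    and "permutation q" and "sign q = - sign p"
    and "card (range (cls q)) = Suc (card (range (cls p)))"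
proof -
  have injp: "inj p" using perm permutation_bijective bij_is_inj by blast
  show qperm: "permutation q" unfolding q_def
    by (intro permutation_compose perm permutation_swap_id)
  show "sign q = - sign p"
  proof -
    have "sign (Transposition.transpose x (p x)) = -1" using sign_swap_id[of x "p x"] px by auto
    then show ?thesis unfolding q_def using sign_compose[OF permutation_swap_id perm] by simp
  qed
  define L where "L = least_power p x"
  have L2: "L > 1" using least_power_gt_one[OF perm px] L_def by simp
  have LL: "(p ^^ L) x = x" using least_power_of_permutation[OF perm] L_def by simp
  have dist: "\<And>i j. i < j \<Longrightarrow> j < L \<Longrightarrow> (p ^^ i) x \<noteq> (p ^^ j) x"
    using lp_distinct[OF perm] L_def by blast
  have p1: "(p ^^ 1) x = p x" by simp
  have s1: "q ((p ^^ j) x) = (if Suc j < L then (p ^^ Suc j) x else p x)"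
    if "1 \<le> j" "j < L" for j
  proof (cases "Suc j < L")
    case True
    define z where "z = (p ^^ Suc j) x"
    have z1: "z \<noteq> x" using dist[of 0 "Suc j"] True z_def by simp
    have "(p ^^ 1) x \<noteq> (p ^^ Suc j) x" using dist[of 1 "Suc j"] True that by simp
    then have z2: "z \<noteq> p x" unfolding z_def p1 by simp
    have "q ((p ^^ j) x) = Transposition.transpose x (p x) z" by (simp add: q_def z_def)
    also have "\<dots> = z" using z1 z2 by simp
    finally show ?thesis using True z_def by simp
  next
    case False
    then have "Suc j = L" using that by simp
    moreover have "p ((p ^^ j) x) = (p ^^ Suc j) x" by simp
    ultimately have "p ((p ^^ j) x) = x" using LL by simp
    then show ?thesis using False by (simp add: q_def)
  qed
  define T where "T = {(p ^^ j) x | j. 1 \<le> j \<and> j < L}"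
  have s2: "(q ^^ m) (p x) = (p ^^ Suc m) x" if "Suc m < L" for m
    using that
  proof (induction m)
    case 0 then show ?case by simp
  next
    case (Suc m)
    then have "(q ^^ Suc m) (p x) = q ((p ^^ Suc m) x)" by simp
    also have "\<dots> = (p ^^ Suc (Suc m)) x" using s1[of "Suc m"] Suc.prems by simp
    finally show ?case .
  qed
  have Tmem: "(p ^^ j) x \<in> T" if "1 \<le> j" "j < L" for j
    unfolding T_def using that by blast
  have s3a: "(q ^^ m) (p x) \<in> T" for m
  proof (induction m)
    case 0 then show ?case using Tmem[of 1] L2 p1 by simp
  next
    case (Suc m)
    then obtain j where j: "(q ^^ m) (p x) = (p ^^ j) x" "1 \<le> j" "j < L" unfolding T_def by blast
    have "(q ^^ Suc m) (p x) = q ((p ^^ j) x)" using j by simp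
    also have "\<dots> = (if Suc j < L then (p ^^ Suc j) x else p x)" using s1 j by simp
    finally have qq: "(q ^^ Suc m) (p x) = (if Suc j < L then (p ^^ Suc j) x else p x)" .
    show ?case
    proof (cases "Suc j < L")
      case True
      then show ?thesis using qq Tmem[of "Suc j"] by simp
    next
      case False
      then show ?thesis using qq Tmem[of 1] L2 p1 by simp
    qed
  qed
  have s3: "cls q (p x) = T"
  proof
    show "cls q (p x) \<subseteq> T"
    proof
      fix z assume "z \<in> cls q (p x)"
      then obtain m where "z = (q ^^ m) (p x)" by (rule cls_E)
      then show "z \<in> T" using s3a by simp
    qed
    show "T \<subseteq> cls q (p x)"
    proof
      fix z assume "z \<in> T"
      then obtain j where j: "z = (p ^^ j) x" "1 \<le> j" "j < L" unfolding T_def by blast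
      then have "z = (q ^^ (j - 1)) (p x)" using s2[of "j - 1"] by simp
      then show "z \<in> cls q (p x)" by (simp add: cls_funpow)
    qed
  qed
  have clsx: "cls p x = {(p ^^ j) x | j. j < L}" unfolding L_def by (rule cls_bounded[OF perm])
  have s4: "T = cls p x - {x}"
  proof
    show "T \<subseteq> cls p x - {x}"
    proof
      fix z assume "z \<in> T"
      then obtain j where j: "z = (p ^^ j) x" "1 \<le> j" "j < L" unfolding T_def by blast
      have "z \<in> cls p x" using j(1) by (simp add: cls_funpow)
      moreover have "(p ^^ 0) x \<noteq> (p ^^ j) x" using dist[of 0 j] j by simp
      then have "z \<noteq> x" using j(1) by simp
      ultimately show "z \<in> cls p x - {x}" by simp
    qed
    show "cls p x - {x} \<subseteq> T"
    proof
      fix z assume z: "z \<in> cls p x - {x}"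
      then have "z \<in> cls p x" by simp
      then obtain j where j: "z = (p ^^ j) x" "j < L" unfolding clsx by blast
      have "j \<noteq> 0"
      proof
        assume "j = 0" then show False using z j by simp
      qed
      then show "z \<in> T" using Tmem[of j] j by simp
    qed
  qed
  have qx: "q x = x" unfolding q_def by simp
  have qxm: "(q ^^ m) x = x" for m by (induction m) (simp_all add: qx)
  have s5: "cls q x = {x}" unfolding cls_def using qxm by simp
  have s6: "cls q y = cls p y" if y: "y \<notin> cls p x" for y
  proof -
    have "(q ^^ m) y = (p ^^ m) y" for m
    proof (induction m)
      case (Suc m)
      define z where "z = (p ^^ m) y"
      have zc: "z \<notin> cls p x"
      proof
        assume "z \<in> cls p x"
        moreover have "z \<in> cls p y" unfolding z_def by (rule cls_funpow)
        ultimately have "cls p x = cls p y" by (rule cls_inter[OF perm])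
        then show False using y cls_self[of y p] by simp
      qed
      have "p z \<notin> cls p x" using cls_closed_rev[OF perm] zc by blast
      then have "p z \<noteq> x" "p z \<noteq> p x" using cls_self[of x p] cls_step[of p x] by auto
      then have "q z = p z" unfolding q_def by simp
      then show ?case using Suc z_def by simp
    qed simp
    then show ?thesis unfolding cls_def by simp
  qed
  have xT: "x \<notin> T" using s4 by simp
  have pxT: "p x \<in> T" using cls_self[of "p x" q] s3 by simp
  show rq: "range (cls q) = (range (cls p) - {cls p x}) \<union> {{x}, cls p x - {x}}"
  proof
    show "range (cls q) \<subseteq> (range (cls p) - {cls p x}) \<union> {{x}, cls p x - {x}}"
    proof
      fix Q assume "Q \<in> range (cls q)"
      then obtain y where Q: "Q = cls q y" by blast
      show "Q \<in> (range (cls p) - {cls p x}) \<union> {{x}, cls p x - {x}}"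
      proof (cases "y \<in> cls p x")
        case True
        show ?thesis
        proof (cases "y = x")
          case True then show ?thesis using Q s5 by simp
        next
          case False
          then have yq: "y \<in> cls q (p x)" using s3 s4 \<open>y \<in> cls p x\<close> by simp
          have "cls q y = cls q (p x)" by (rule cls_eq[OF qperm yq])
          then show ?thesis using Q s3 s4 by simp
        qed
      next
        case False
        then have "cls p y \<noteq> cls p x" using cls_self[of y p] by auto
        then show ?thesis using Q s6[OF False] by simp
      qed
    qed
    show "(range (cls p) - {cls p x}) \<union> {{x}, cls p x - {x}} \<subseteq> range (cls q)"
    proof
      fix Q assume "Q \<in> (range (cls p) - {cls p x}) \<union> {{x}, cls p x - {x}}"
      then consider (a) y where "Q = cls p y" "cls p y \<noteq> cls p x" | (b) "Q = {x}" | (c) "Q = cls p x - {x}"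
        by blast
      then show "Q \<in> range (cls q)"
      proof cases
        case (a y)
        have "y \<notin> cls p x"
        proof
          assume "y \<in> cls p x"
          then have "cls p y = cls p x" by (rule cls_eq[OF perm])
          then show False using a(2) by simp
        qed
        then have "Q = cls q y" using a(1) s6 by simp
        then show ?thesis by simp
      next
        case b then have "Q = cls q x" using s5 by simp
        then show ?thesis by simp
      next
        case c then have "Q = cls q (p x)" using s3 s4 by simp
        then show ?thesis by simp
      qed
    qed
  qed
  show "card (range (cls q)) = Suc (card (range (cls p)))"
  proof -
    have n1: "{x} \<notin> range (cls p) - {cls p x}"
    proof
      assume "{x} \<in> range (cls p) - {cls p x}"
      then obtain y where y: "{x} = cls p y" "cls p y \<noteq> cls p x" by blast
      have "y \<in> {x}" using y(1) cls_self[of y p] by simp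
      then have "y = x" by simp
      then show False using y by simp
    qed
    have n2: "cls p x - {x} \<notin> range (cls p) - {cls p x}"
    proof
      assume "cls p x - {x} \<in> range (cls p) - {cls p x}"
      then obtain y where y: "cls p x - {x} = cls p y" "cls p y \<noteq> cls p x" by blast
      have pxy: "p x \<in> cls p y" using y(1) pxT s4 by simp
      have "cls p y = cls p x" using cls_inter[OF perm pxy cls_step[of p x]] by simp
      then show False using y by simp
    qed
    have n3: "{x} \<noteq> cls p x - {x}" by auto
    have fin: "finite (range (cls p))" by simp
    have mem: "cls p x \<in> range (cls p)" by simp
    have c1: "card (range (cls p) - {cls p x}) = card (range (cls p)) - 1"
      using mem fin by (simp add: card_Diff_singleton)
    have c0: "0 < card (range (cls p))" using fin mem card_gt_0_iff by blast
    have fin2: "finite (range (cls p) - {cls p x})" using fin by simp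
    have "card (range (cls q)) = card (insert {x} (insert (cls p x - {x}) (range (cls p) - {cls p x})))"
      unfolding rq by (simp add: insert_commute)
    also have "\<dots> = Suc (Suc (card (range (cls p) - {cls p x})))"
      using n1 n2 n3 fin2 by simp
    also have "\<dots> = Suc (card (range (cls p)))" using c1 c0 by simp
    finally show ?thesis .
  qed
  show "{y. q y \<noteq> y} \<subset> {y. p y \<noteq> y}"
  proof -
    have "q y = y" if "p y = y" for y
    proof -
      have "y \<noteq> x" using that px by auto
      moreover have "y \<noteq> p x"
      proof
        assume "y = p x"
        then have "p (p x) = p x" using that by simp
        then have "p x = x" by (rule injD[OF injp])
        then show False using px by simp
      qed
      ultimately show ?thesis unfolding q_def using that by simp
    qed
    then show ?thesis using qx px by blast
  qed
qed

lemma sign_cls: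
  fixes p :: "'a::finite \<Rightarrow> 'a"
  assumes "permutation p"
  shows "sign p = (-1::int) ^ (CARD('a) - card (range (cls p)))"
  using assms
proof (induction "card {x. p x \<noteq> x}" arbitrary: p rule: less_induct)
  case less
  show ?case
  proof (cases "\<exists>x. p x \<noteq> x")
    case False
    then have pid: "p = id" by auto
    have r: "range (cls id) = (\<lambda>x. {x}) ` (UNIV :: 'a set)" by (auto simp: cls_id)
    have "card ((\<lambda>x. {x}) ` (UNIV :: 'a set)) = CARD('a)"
      by (simp add: card_image)
    then show ?thesis unfolding pid r by simp
  next
    case True
    then obtain x where px: "p x \<noteq> x" by auto
    define q where "q = Transposition.transpose x (p x) \<circ> p"
    note st = sign_step[OF less.prems px, folded q_def]
    have "card {y. q y \<noteq> y} < card {y. p y \<noteq> y}" using st(2) by (simp add: psubset_card_mono)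
    then have IH: "sign q = (-1) ^ (CARD('a) - card (range (cls q)))" using less.hyps st(3) by blast
    have le: "card (range (cls q)) \<le> CARD('a)" by (rule card_range_cls_le)
    have e: "CARD('a) - card (range (cls p)) = Suc (CARD('a) - card (range (cls q)))"
      using le unfolding st(5) by arith
    have "sign p = - sign q" using st(4) by simp
    also have "\<dots> = (-1) ^ (CARD('a) - card (range (cls p)))"
      unfolding IH e by simp
    finally show ?thesis .
  qed
qed

definition Eg :: "('a \<Rightarrow> 'a) \<Rightarrow> 'a \<Rightarrow> ('a \<times> 'a) set" where
  "Eg p k = {(i, p i) | i. i \<noteq> k}"

lemma conv_sym_rtrancl:
  assumes "(x, y) \<in> (E \<union> E\<inverse>)\<^sup>*" shows "(y, x) \<in> (E \<union> E\<inverse>)\<^sup>*"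
proof -
  have "(y, x) \<in> ((E \<union> E\<inverse>)\<inverse>)\<^sup>*" using assms by (simp add: rtrancl_converseI)
  moreover have "(E \<union> E\<inverse>)\<inverse> = E \<union> E\<inverse>" by auto
  ultimately show ?thesis by simp
qed

lemma comp_Eg:
  assumes perm: "permutation p"
  shows "{w. (v, w) \<in> (Eg p k \<union> (Eg p k)\<inverse>)\<^sup>*} = cls p v"
proof
  let ?R = "Eg p k \<union> (Eg p k)\<inverse>"
  show "{w. (v, w) \<in> ?R\<^sup>*} \<subseteq> cls p v"
  proof
    fix w assume "w \<in> {w. (v, w) \<in> ?R\<^sup>*}"
    then have "(v, w) \<in> ?R\<^sup>*" by simp
    then show "w \<in> cls p v"
    proof (induction rule: rtrancl_induct)
      case base then show ?case by (rule cls_self)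
    next
      case (step y z)
      from step.hyps(2) have "z = p y \<or> y = p z" unfolding Eg_def by blast
      then show ?case
      proof
        assume "z = p y" then show ?thesis using cls_closed[OF step.IH] by simp
      next
        assume "y = p z" then show ?thesis using cls_closed_rev[OF perm, of z v] step.IH by simp
      qed
    qed
  qed
  define L where "L = least_power p k"
  have L: "L > 0" "(p ^^ L) k = k" using least_power_of_permutation[OF perm] L_def by auto
  have chain: "(p k, (p ^^ Suc j) k) \<in> (Eg p k)\<^sup>*" if "j < L" for j
    using that
  proof (induction j)
    case 0 then show ?case by simp
  next
    case (Suc j)
    have "(p ^^ Suc j) k \<noteq> (p ^^ 0) k" using lp_distinct[OF perm, of 0 "Suc j" k] Suc.prems L_def by simp
    then have ed: "((p ^^ Suc j) k, p ((p ^^ Suc j) k)) \<in> Eg p k" unfolding Eg_def by auto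
    have ih: "(p k, (p ^^ Suc j) k) \<in> (Eg p k)\<^sup>*" using Suc.IH Suc.prems by simp
    have "(p k, p ((p ^^ Suc j) k)) \<in> (Eg p k)\<^sup>*" by (rule rtrancl_into_rtrancl[OF ih ed])
    then show ?case by (simp only: funpow.simps(2) comp_apply)
  qed
  have "(p k, (p ^^ Suc (L - 1)) k) \<in> (Eg p k)\<^sup>*" using chain[of "L - 1"] L by simp
  then have "(p k, k) \<in> (Eg p k)\<^sup>*" using L by simp
  moreover have "(Eg p k)\<^sup>* \<subseteq> ?R\<^sup>*" by (rule rtrancl_mono) blast
  ultimately have "(p k, k) \<in> ?R\<^sup>*" by blast
  then have kpk: "(k, p k) \<in> ?R\<^sup>*" by (rule conv_sym_rtrancl)
  have stp: "(z, p z) \<in> ?R\<^sup>*" for z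
  proof (cases "z = k")
    case True then show ?thesis using kpk by simp
  next
    case False then have "(z, p z) \<in> ?R" unfolding Eg_def by blast
    then show ?thesis by (rule r_into_rtrancl)
  qed
  have mm: "(v, (p ^^ m) v) \<in> ?R\<^sup>*" for m
  proof (induction m)
    case 0 then show ?case by simp
  next
    case (Suc m)
    have "(v, p ((p ^^ m) v)) \<in> ?R\<^sup>*" by (rule rtrancl_trans[OF Suc.IH stp])
    then show ?case by (simp only: funpow.simps(2) comp_apply)
  qed
  show "cls p v \<subseteq> {w. (v, w) \<in> ?R\<^sup>*}"
  proof
    fix w assume "w \<in> cls p v"
    then obtain m where "w = (p ^^ m) v" unfolding cls_def by blast
    then show "w \<in> {w. (v, w) \<in> ?R\<^sup>*}" using mm by simp
  qed
qed

lemma dcomponents_Eg: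
  assumes perm: "permutation p"
  shows "dcomponents UNIV (Eg p k) = range (cls p)"
proof -
  have h: "(\<lambda>v. {w \<in> UNIV. (v, w) \<in> (Eg p k \<union> (Eg p k)\<inverse>)\<^sup>*}) = cls p"
  proof
    fix v show "{w \<in> UNIV. (v, w) \<in> (Eg p k \<union> (Eg p k)\<inverse>)\<^sup>*} = cls p v"
      using comp_Eg[OF perm, of v k] by simp
  qed
  show ?thesis unfolding dcomponents_def h ..
qed

lemma Eg_mem: "(i, j) \<in> Eg p k \<longleftrightarrow> j = p i \<and> i \<noteq> k"
  unfolding Eg_def by blast

lemma Eg_restrict:
  assumes perm: "permutation p"
  shows "Eg p k \<inter> cls p y \<times> cls p y = {(i, p i) | i. i \<in> cls p y \<and> i \<noteq> k}"
proof (rule set_eqI)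
  fix e :: "'a \<times> 'a"
  obtain i j where e: "e = (i, j)" by fastforce
  have c: "i \<in> cls p y \<Longrightarrow> p i \<in> cls p y" by (rule cls_closed)
  have "(i, j) \<in> Eg p k \<inter> cls p y \<times> cls p y \<longleftrightarrow> j = p i \<and> i \<noteq> k \<and> i \<in> cls p y \<and> j \<in> cls p y"
    by (simp add: Eg_mem)
  also have "\<dots> \<longleftrightarrow> j = p i \<and> i \<noteq> k \<and> i \<in> cls p y"
    using c by auto
  finally have 1: "(i, j) \<in> Eg p k \<inter> cls p y \<times> cls p y \<longleftrightarrow> j = p i \<and> i \<noteq> k \<and> i \<in> cls p y" .
  have 2: "(i, j) \<in> {(i, p i) | i. i \<in> cls p y \<and> i \<noteq> k} \<longleftrightarrow> j = p i \<and> i \<noteq> k \<and> i \<in> cls p y"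
    by auto
  show "e \<in> Eg p k \<inter> cls p y \<times> cls p y \<longleftrightarrow> e \<in> {(i, p i) | i. i \<in> cls p y \<and> i \<noteq> k}"
    unfolding e 1 2 ..
qed

lemma cycle_Eg:
  assumes perm: "permutation p" and k: "k \<notin> cls p y"
  shows "is_dcycle (cls p y) (Eg p k \<inter> cls p y \<times> cls p y)"
proof -
  define L where "L = least_power p y"
  have L: "L > 0" "(p ^^ L) y = y" using least_power_of_permutation[OF perm] L_def by auto
  define vs where "vs = support p y"
  have len: "length vs = L" unfolding vs_def L_def by simp
  have nth: "j < L \<Longrightarrow> vs ! j = (p ^^ j) y" for j unfolding vs_def L_def by simp
  have "vs \<noteq> []" using len L by auto
  moreover have "distinct vs" unfolding vs_def using cycle_of_permutation[OF perm] .
  moreover have "set vs = cls p y" unfolding vs_def cls_def using support_set[OF perm] .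
  moreover have "Eg p k \<inter> cls p y \<times> cls p y = {(vs ! j, vs ! (Suc j mod length vs)) | j. j < length vs}"
  proof -
    have e: "vs ! (Suc j mod length vs) = p ((p ^^ j) y)" if "j < L" for j
    proof -
      have "vs ! (Suc j mod length vs) = (p ^^ (Suc j mod L)) y" using nth len L by simp
      also have "\<dots> = (p ^^ Suc j) y" using funpow_mod_eq[where f=p and n=L and x=y and m="Suc j"] L by simp
      finally show ?thesis by simp
    qed
    have pw: "(vs ! j, vs ! (Suc j mod length vs)) = ((p ^^ j) y, p ((p ^^ j) y))" if "j < L" for j
      using e[OF that] nth[OF that] by simp
    have c: "cls p y = (\<lambda>j. (p ^^ j) y) ` {..<L}"
      unfolding L_def cls_bounded[OF perm] by blast
    have "Eg p k \<inter> cls p y \<times> cls p y = {(i, p i) | i. i \<in> cls p y}"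
      unfolding Eg_restrict[OF perm] using k by auto
    also have "\<dots> = (\<lambda>i. (i, p i)) ` cls p y" by (rule Setcompr_eq_image)
    also have "\<dots> = (\<lambda>j. ((p ^^ j) y, p ((p ^^ j) y))) ` {..<L}" unfolding c image_image ..
    also have "\<dots> = (\<lambda>j. (vs ! j, vs ! (Suc j mod length vs))) ` {..<L}"
      by (rule image_cong[OF refl]) (simp add: pw)
    also have "\<dots> = {(vs ! j, vs ! (Suc j mod length vs)) | j. j < length vs}"
      unfolding len by (simp add: Setcompr_eq_image[symmetric] lessThan_def)
    finally show ?thesis .
  qed
  ultimately show ?thesis unfolding is_dcycle_def by blast
qed

lemma path_Eg:
  assumes perm: "permutation p"
  shows "is_dpath (cls p k) (Eg p k \<inter> cls p k \<times> cls p k) (p k) k"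
proof -
  define L where "L = least_power p k"
  have L: "L > 0" "(p ^^ L) k = k" using least_power_of_permutation[OF perm] L_def by auto
  have injp: "inj p" using perm permutation_bijective bij_is_inj by blast
  define vs where "vs = map (\<lambda>j. (p ^^ Suc j) k) [0..<L]"
  have len: "length vs = L" unfolding vs_def by simp
  have nth: "j < L \<Longrightarrow> vs ! j = (p ^^ Suc j) k" for j unfolding vs_def by simp
  have ne: "vs \<noteq> []" using len L by auto
  have hd: "hd vs = p k" using ne nth[of 0] L by (simp add: hd_conv_nth len)
  have lst: "last vs = k" using ne nth[of "L - 1"] L by (simp add: last_conv_nth len)
  have dist: "distinct vs"
    unfolding vs_def distinct_map
  proof
    show "inj_on (\<lambda>j. (p ^^ Suc j) k) (set [0..<L])"
    proof (rule inj_onI)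
      fix i j assume i: "i \<in> set [0..<L]" and j: "j \<in> set [0..<L]" and eq: "(p ^^ Suc i) k = (p ^^ Suc j) k"
      then have "(p ^^ i) k = (p ^^ j) k" using injp by (simp add: inj_eq)
      then show "i = j" using lp_distinct[OF perm, of i j k] lp_distinct[OF perm, of j i k] i j L_def
        by (metis atLeastLessThan_iff linorder_neqE_nat set_upt)
    qed
  qed simp
  have clsk: "cls p k = {(p ^^ j) k | j. j < L}" unfolding L_def by (rule cls_bounded[OF perm])
  have memc: "i \<in> cls p k \<and> i \<noteq> k \<longleftrightarrow> (\<exists>j. Suc j < L \<and> i = (p ^^ Suc j) k)" for i
  proof
    assume "i \<in> cls p k \<and> i \<noteq> k"
    then obtain m where m: "i = (p ^^ m) k" "m < L" unfolding clsk by auto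
    have "m \<noteq> 0"
    proof
      assume "m = 0" then show False using m \<open>i \<in> cls p k \<and> i \<noteq> k\<close> by simp
    qed
    then show "\<exists>j. Suc j < L \<and> i = (p ^^ Suc j) k" using \<open>m \<noteq> 0\<close> m by (intro exI[of _ "m - 1"]) auto
  next
    assume "\<exists>j. Suc j < L \<and> i = (p ^^ Suc j) k"
    then obtain j where j: "Suc j < L" "i = (p ^^ Suc j) k" by auto
    have "i \<noteq> k" using lp_distinct[OF perm, of 0 "Suc j" k] j L_def by simp
    then show "i \<in> cls p k \<and> i \<noteq> k" using j clsk by auto
  qed
  have st: "set vs = cls p k"
  proof
    show "set vs \<subseteq> cls p k" unfolding vs_def by (auto simp: cls_funpow simp del: funpow.simps)
    show "cls p k \<subseteq> set vs"
    proof
      fix z assume "z \<in> cls p k"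
      then obtain m where m: "z = (p ^^ m) k" "m < L" unfolding clsk by auto
      show "z \<in> set vs"
      proof (cases m)
        case 0
        then have "z = vs ! (L - 1)" using nth[of "L - 1"] L m by simp
        then show ?thesis using len L by simp
      next
        case (Suc j)
        then have "z = vs ! j" using nth[of j] m by simp
        then show ?thesis using len m Suc by simp
      qed
    qed
  qed
  have ed: "Eg p k \<inter> cls p k \<times> cls p k = {(vs ! j, vs ! Suc j) | j. Suc j < length vs}"
  proof -
    have "Eg p k \<inter> cls p k \<times> cls p k = {(i, p i) | i. i \<in> cls p k \<and> i \<noteq> k}"
      by (rule Eg_restrict[OF perm])
    also have "\<dots> = (\<lambda>i. (i, p i)) ` {i. i \<in> cls p k \<and> i \<noteq> k}"
      by (simp add: Setcompr_eq_image[symmetric])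
    also have "{i. i \<in> cls p k \<and> i \<noteq> k} = (\<lambda>j. (p ^^ Suc j) k) ` {j. Suc j < L}"
      using memc by (auto simp del: funpow.simps)
    also have "(\<lambda>i. (i, p i)) ` (\<lambda>j. (p ^^ Suc j) k) ` {j. Suc j < L} =
        (\<lambda>j. ((p ^^ Suc j) k, p ((p ^^ Suc j) k))) ` {j. Suc j < L}" by (simp only: image_image)
    also have "\<dots> = (\<lambda>j. (vs ! j, vs ! Suc j)) ` {j. Suc j < L}"
    proof (rule image_cong[OF refl])
      fix j assume "j \<in> {j. Suc j < L}"
      then have "Suc j < L" by simp
      then show "((p ^^ Suc j) k, p ((p ^^ Suc j) k)) = (vs ! j, vs ! Suc j)"
        using nth[of j] nth[of "Suc j"] by simp
    qed
    also have "\<dots> = {(vs ! j, vs ! Suc j) | j. Suc j < length vs}"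
      unfolding len by (simp add: Setcompr_eq_image[symmetric])
    finally show ?thesis .
  qed
  show ?thesis unfolding is_dpath_def using ne dist st hd lst ed by blast
qed

lemma not_cycle_Eg:
  shows "\<not> is_dcycle (cls p k) (Eg p k \<inter> cls p k \<times> cls p k)"
proof
  assume "is_dcycle (cls p k) (Eg p k \<inter> cls p k \<times> cls p k)"
  then obtain vs where vs: "vs \<noteq> []" "set vs = cls p k"
    "Eg p k \<inter> cls p k \<times> cls p k = {(vs ! j, vs ! (Suc j mod length vs)) | j. j < length vs}"
    unfolding is_dcycle_def by blast
  have "k \<in> set vs" using vs(2) cls_self[of k p] by simp
  then obtain j where j: "j < length vs" "vs ! j = k" by (auto simp: in_set_conv_nth)
  have "(vs ! j, vs ! (Suc j mod length vs)) \<in> {(vs ! j, vs ! (Suc j mod length vs)) | j. j < length vs}"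
    using j(1) by blast
  then have "(vs ! j, vs ! (Suc j mod length vs)) \<in> Eg p k \<inter> cls p k \<times> cls p k"
    unfolding vs(3) .
  then have "(vs ! j, vs ! (Suc j mod length vs)) \<in> Eg p k" by (rule IntD1)
  then show False using j(2) unfolding Eg_mem by simp
qed

lemma pcg_Eg:
  assumes perm: "permutation p"
  shows "path_cycles_graph (Eg p k) (p k) k"
    and "num_cycles (Eg p k) = card (range (cls p)) - 1"
proof -
  have cyc: "is_dcycle Q (Eg p k \<inter> Q \<times> Q) \<longleftrightarrow> Q \<noteq> cls p k" if Qr: "Q \<in> range (cls p)" for Q
  proof -
    obtain y where Q: "Q = cls p y" using Qr by blast
    show ?thesis
    proof (cases "k \<in> cls p y")
      case True
      then have "Q = cls p k" using Q cls_eq[OF perm] by metis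
      then show ?thesis using not_cycle_Eg by simp
    next
      case False
      then have "Q \<noteq> cls p k" using Q cls_self by metis
      then show ?thesis using cycle_Eg[OF perm False] Q by simp
    qed
  qed
  show "path_cycles_graph (Eg p k) (p k) k"
    unfolding path_cycles_graph_def dcomponents_Eg[OF perm]
  proof (rule bexI[of _ "cls p k"], rule conjI)
    show "is_dpath (cls p k) (Eg p k \<inter> cls p k \<times> cls p k) (p k) k" by (rule path_Eg[OF perm])
    show "\<forall>Q\<in>range (cls p) - {cls p k}. is_dcycle Q (Eg p k \<inter> Q \<times> Q)"
    proof
      fix Q assume "Q \<in> range (cls p) - {cls p k}"
      then show "is_dcycle Q (Eg p k \<inter> Q \<times> Q)" using cyc[of Q] by simp
    qed
  qed simp
  have "{Q \<in> range (cls p). is_dcycle Q (Eg p k \<inter> Q \<times> Q)} = range (cls p) - {cls p k}"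
  proof (rule set_eqI)
    fix Q
    show "Q \<in> {Q \<in> range (cls p). is_dcycle Q (Eg p k \<inter> Q \<times> Q)} \<longleftrightarrow> Q \<in> range (cls p) - {cls p k}"
      using cyc[of Q] by (cases "Q \<in> range (cls p)") simp_all
  qed
  then show "num_cycles (Eg p k) = card (range (cls p)) - 1"
    unfolding num_cycles_def dcomponents_Eg[OF perm] by (simp add: card_Diff_singleton)
qed



lemma suc_mod_cases: "i < n \<Longrightarrow> Suc i mod n = (if Suc i = n then 0 else Suc i)"
  by (cases "Suc i = n") auto

lemma pe_succ:
  assumes "distinct vs" "(x, y) \<in> {(vs ! j, vs ! Suc j) | j. Suc j < length vs}"
    "(x, y') \<in> {(vs ! j, vs ! Suc j) | j. Suc j < length vs}"
  shows "y = y'"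
  using assms by (auto simp: nth_eq_iff_index_eq)

lemma pe_pred:
  assumes "distinct vs" "(x, y) \<in> {(vs ! j, vs ! Suc j) | j. Suc j < length vs}"
    "(x', y) \<in> {(vs ! j, vs ! Suc j) | j. Suc j < length vs}"
  shows "x = x'"
  using assms by (auto simp: nth_eq_iff_index_eq)

lemma pe_last:
  assumes "distinct vs" "vs \<noteq> []"
  shows "(last vs, y) \<notin> {(vs ! j, vs ! Suc j) | j. Suc j < length vs}"
  using assms by (auto simp: nth_eq_iff_index_eq last_conv_nth)

lemma pe_hd:
  assumes "distinct vs" "vs \<noteq> []"
  shows "(x, hd vs) \<notin> {(vs ! j, vs ! Suc j) | j. Suc j < length vs}"
  using assms by (auto simp: nth_eq_iff_index_eq hd_conv_nth)

lemma pe_ex: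
  assumes "x \<in> set vs" "x \<noteq> last vs"
  shows "\<exists>y. (x, y) \<in> {(vs ! j, vs ! Suc j) | j. Suc j < length vs}"
proof -
  obtain j where j: "j < length vs" "vs ! j = x" using assms(1) by (metis in_set_conv_nth)
  have "vs \<noteq> []" using assms by auto
  then have "Suc j < length vs" using j assms(2) last_conv_nth
    by (metis Suc_lessI diff_Suc_1)
  then show ?thesis using j by blast
qed

lemma ce_succ:
  assumes "distinct vs" "(x, y) \<in> {(vs ! j, vs ! (Suc j mod length vs)) | j. j < length vs}"
    "(x, y') \<in> {(vs ! j, vs ! (Suc j mod length vs)) | j. j < length vs}"
  shows "y = y'"
  using assms by (auto simp: nth_eq_iff_index_eq)

lemma ce_pred:
  assumes "distinct vs" "(x, y) \<in> {(vs ! j, vs ! (Suc j mod length vs)) | j. j < length vs}"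
    "(x', y) \<in> {(vs ! j, vs ! (Suc j mod length vs)) | j. j < length vs}"
  shows "x = x'"
proof -
  obtain i j where ij: "i < length vs" "j < length vs" "x = vs ! i" "x' = vs ! j"
    "vs ! (Suc i mod length vs) = vs ! (Suc j mod length vs)" using assms(2,3) by auto
  have "length vs > 0" using ij by auto
  then have "Suc i mod length vs < length vs" "Suc j mod length vs < length vs" by simp_all
  then have "Suc i mod length vs = Suc j mod length vs" using nth_eq_iff_index_eq[OF assms(1)] ij(5) by blast
  then have "i = j" using ij(1,2) suc_mod_cases[of i "length vs"] suc_mod_cases[of j "length vs"]
    by (auto split: if_splits)
  then show ?thesis using ij by simp
qed

lemma ce_ex:
  assumes "x \<in> set vs"
  shows "\<exists>y. (x, y) \<in> {(vs ! j, vs ! (Suc j mod length vs)) | j. j < length vs}"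
proof -
  obtain j where j: "j < length vs" "vs ! j = x" using assms(1) by (metis in_set_conv_nth)
  then show ?thesis by blast
qed

lemma pcg_surj:
  fixes E :: "('a::finite \<times> 'a) set"
  assumes pcg: "path_cycles_graph E s t"
  shows "\<exists>f. f permutes UNIV \<and> E = {(i, f i) | i. i \<noteq> t} \<and> s = f t"
proof -
  let ?R = "E \<union> E\<inverse>"
  define comp where "comp v = {w \<in> UNIV. (v, w) \<in> ?R\<^sup>*}" for v
  have dc: "dcomponents UNIV E = range comp" unfolding dcomponents_def comp_def by simp
  obtain P where P: "P \<in> range comp" "is_dpath P (E \<inter> P \<times> P) s t"
    and Q: "\<And>Q. Q \<in> range comp \<Longrightarrow> Q \<noteq> P \<Longrightarrow> is_dcycle Q (E \<inter> Q \<times> Q)"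
    using pcg unfolding path_cycles_graph_def dc by blast
  obtain vs where vs: "vs \<noteq> []" "distinct vs" "set vs = P" "hd vs = s" "last vs = t"
    "E \<inter> P \<times> P = {(vs ! k, vs ! Suc k) | k. Suc k < length vs}"
    using P(2) unfolding is_dpath_def by blast
  have symR: "(x, y) \<in> ?R\<^sup>* \<Longrightarrow> (y, x) \<in> ?R\<^sup>*" for x y
  proof -
    assume "(x, y) \<in> ?R\<^sup>*"
    then have "(y, x) \<in> (?R\<inverse>)\<^sup>*" by (simp add: rtrancl_converseI)
    moreover have "?R\<inverse> = ?R" by auto
    ultimately show ?thesis by simp
  qed
  have comp_self: "u \<in> comp u" for u unfolding comp_def by simp
  have comp_eq: "w \<in> comp v \<Longrightarrow> comp w = comp v" for v w
  proof -
    assume "w \<in> comp v"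
    then have vw: "(v, w) \<in> ?R\<^sup>*" unfolding comp_def by simp
    have wv: "(w, v) \<in> ?R\<^sup>*" using symR[OF vw] .
    show "comp w = comp v"
    proof
      show "comp w \<subseteq> comp v" unfolding comp_def using rtrancl_trans[OF vw] by blast
      show "comp v \<subseteq> comp w" unfolding comp_def using rtrancl_trans[OF wv] by blast
    qed
  qed
  have edge_comp: "(u, v) \<in> E \<Longrightarrow> v \<in> comp u" for u v unfolding comp_def by auto
  have sP: "comp s = P" and tP: "comp t = P"
  proof -
    obtain w where w: "P = comp w" using P(1) by blast
    have "s \<in> P" "t \<in> P" using vs(1,3,4,5) hd_in_set last_in_set by blast+
    then show "comp s = P" "comp t = P" using comp_eq w by simp_all
  qed
  have inQ: "(u, v) \<in> E \<Longrightarrow> (u, v) \<in> E \<inter> comp u \<times> comp u" for u v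
    using edge_comp comp_self by auto
  have cyc: "comp u \<noteq> P \<Longrightarrow> \<exists>ws. distinct ws \<and> set ws = comp u \<and>
      E \<inter> comp u \<times> comp u = {(ws ! k, ws ! (Suc k mod length ws)) | k. k < length ws}" for u
    using Q[of "comp u"] unfolding is_dcycle_def by blast
  have o3: "(u, v) \<in> E \<Longrightarrow> (u, v') \<in> E \<Longrightarrow> v = v'" for u v v'
  proof -
    assume e: "(u, v) \<in> E" "(u, v') \<in> E"
    show "v = v'"
    proof (cases "comp u = P")
      case True
      have "(u, v) \<in> {(vs ! k, vs ! Suc k) | k. Suc k < length vs}"
        using inQ[OF e(1)] True vs(6) by simp
      moreover have "(u, v') \<in> {(vs ! k, vs ! Suc k) | k. Suc k < length vs}"
        using inQ[OF e(2)] True vs(6) by simp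
      ultimately show ?thesis by (rule pe_succ[OF vs(2)])
    next
      case False
      then obtain ws where ws: "distinct ws"
        "E \<inter> comp u \<times> comp u = {(ws ! k, ws ! (Suc k mod length ws)) | k. k < length ws}"
        using cyc by blast
      have "(u, v) \<in> {(ws ! k, ws ! (Suc k mod length ws)) | k. k < length ws}"
        using inQ[OF e(1)] ws(2) by simp
      moreover have "(u, v') \<in> {(ws ! k, ws ! (Suc k mod length ws)) | k. k < length ws}"
        using inQ[OF e(2)] ws(2) by simp
      ultimately show ?thesis by (rule ce_succ[OF ws(1)])
    qed
  qed
  have i2: "(u, v) \<in> E \<Longrightarrow> (u', v) \<in> E \<Longrightarrow> u = u'" for u u' v
  proof -
    assume e: "(u, v) \<in> E" "(u', v) \<in> E"
    have cu: "comp u = comp v" "comp u' = comp v"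
      using edge_comp[OF e(1)] edge_comp[OF e(2)] comp_eq by (metis, metis)
    have e1: "(u, v) \<in> E \<inter> comp v \<times> comp v" and e2: "(u', v) \<in> E \<inter> comp v \<times> comp v"
      using inQ[OF e(1)] inQ[OF e(2)] cu by auto
    show "u = u'"
    proof (cases "comp v = P")
      case True
      have "(u, v) \<in> {(vs ! k, vs ! Suc k) | k. Suc k < length vs}"
        using e1 True vs(6) by simp
      moreover have "(u', v) \<in> {(vs ! k, vs ! Suc k) | k. Suc k < length vs}"
        using e2 True vs(6) by simp
      ultimately show ?thesis by (rule pe_pred[OF vs(2)])
    next
      case False
      then obtain ws where ws: "distinct ws"
        "E \<inter> comp v \<times> comp v = {(ws ! k, ws ! (Suc k mod length ws)) | k. k < length ws}"
        using cyc by blast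
      have "(u, v) \<in> {(ws ! k, ws ! (Suc k mod length ws)) | k. k < length ws}"
        using e1 ws(2) by simp
      moreover have "(u', v) \<in> {(ws ! k, ws ! (Suc k mod length ws)) | k. k < length ws}"
        using e2 ws(2) by simp
      ultimately show ?thesis by (rule ce_pred[OF ws(1)])
    qed
  qed
  have o1: "(t, v) \<notin> E" for v
  proof
    assume "(t, v) \<in> E"
    then have "(t, v) \<in> E \<inter> P \<times> P" using inQ[of t v] tP by simp
    then have "(last vs, v) \<in> {(vs ! k, vs ! Suc k) | k. Suc k < length vs}" using vs(5,6) by simp
    then show False using pe_last[OF vs(2,1)] by blast
  qed
  have i1: "(u, s) \<notin> E" for u
  proof
    assume e: "(u, s) \<in> E"
    then have "s \<in> comp u" by (rule edge_comp)
    then have "comp u = P" using comp_eq[of s u] sP by simp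
    then have "(u, s) \<in> E \<inter> P \<times> P" using inQ[OF e] by simp
    then have "(u, hd vs) \<in> {(vs ! k, vs ! Suc k) | k. Suc k < length vs}" using vs(4,6) by simp
    then show False using pe_hd[OF vs(2,1)] by blast
  qed
  have o2: "u \<noteq> t \<Longrightarrow> \<exists>v. (u, v) \<in> E" for u
  proof -
    assume ut: "u \<noteq> t"
    show "\<exists>v. (u, v) \<in> E"
    proof (cases "comp u = P")
      case True
      then have "u \<in> set vs" using vs(3) comp_self[of u] by simp
      then show ?thesis using pe_ex[of u vs] vs ut by auto
    next
      case False
      then obtain ws where ws: "set ws = comp u"
        "E \<inter> comp u \<times> comp u = {(ws ! k, ws ! (Suc k mod length ws)) | k. k < length ws}"
        using cyc by blast
      then show ?thesis using ce_ex[of u ws] comp_self by auto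
    qed
  qed
  define f where "f u = (if u = t then s else (THE v. (u, v) \<in> E))" for u
  have fE: "u \<noteq> t \<Longrightarrow> (u, f u) \<in> E" for u
  proof -
    assume ut: "u \<noteq> t"
    then obtain v where v: "(u, v) \<in> E" using o2 by blast
    have "(THE v. (u, v) \<in> E) = v" using v o3 by (intro the_equality) auto
    then show ?thesis using v ut f_def by simp
  qed
  have injf: "inj f"
  proof (rule injI)
    fix u u' assume eq: "f u = f u'"
    show "u = u'"
    proof (cases "u = t"; cases "u' = t")
      assume "u = t" "u' \<noteq> t"
      then have "(u', s) \<in> E" using fE[of u'] eq f_def by simp
      then show ?thesis using i1 by blast
    next
      assume "u \<noteq> t" "u' = t"
      then have "(u, s) \<in> E" using fE[of u] eq f_def by simp
      then show ?thesis using i1 by blast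
    next
      assume "u \<noteq> t" "u' \<noteq> t"
      then show ?thesis using fE[of u] fE[of u'] eq i2 by metis
    qed simp
  qed
  have "bij f" using injf finite_UNIV_inj_surj[of f] by (simp add: bij_def)
  then have fp: "f permutes UNIV" by (intro bij_imp_permutes) (auto simp: bij_betw_def)
  have "E = {(i, f i) | i. i \<noteq> t}"
  proof
    show "{(i, f i) | i. i \<noteq> t} \<subseteq> E" using fE by auto
    show "E \<subseteq> {(i, f i) | i. i \<noteq> t}"
    proof
      fix e assume e: "e \<in> E"
      obtain u v where uv: "e = (u, v)" by force
      have "u \<noteq> t" using o1 e uv by blast
      then have "v = f u" using fE[of u] o3 e uv by blast
      then show "e \<in> {(i, f i) | i. i \<noteq> t}" using uv \<open>u \<noteq> t\<close> by blast
    qed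
  qed
  moreover have "s = f t" unfolding f_def by simp
  ultimately show ?thesis using fp by blast
qed



lemma det_expand:
  fixes C :: "'a::comm_ring_1^'n^'n" and a b :: "'a^'n"
  shows "det ((\<chi> i j. a$i * b$j) - C) = det (-C) +
    (\<Sum>k\<in>UNIV. \<Sum>p\<in>{p. p permutes UNIV}. of_int (sign p) * (a$k * b$(p k) * (\<Prod>i\<in>UNIV-{k}. - C$i$(p i))))"
proof -
  define M where "M = -C"
  define N where "N S = (\<chi> i. if i \<in> S then b else M$i)" for S
  define P where "P = {p. p permutes (UNIV :: 'n set)}"
  define g where "g S = (\<Prod>i\<in>S. a$i) * det (N S)" for S
  have entry: "((\<chi> i j. a$i * b$j) - C)$i$j = a$i*b$j + M$i$j" for i j by (simp add: M_def)
  have dN: "det (N S) = (\<Sum>p\<in>P. of_int (sign p) * ((\<Prod>i\<in>S. b$(p i)) * (\<Prod>i\<in>UNIV-S. M$i$(p i))))" for S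
  proof -
    have "(\<Prod>i\<in>UNIV. N S $ i $ p i) = (\<Prod>i\<in>S. b$(p i)) * (\<Prod>i\<in>UNIV-S. M$i$(p i))" for p
    proof -
      have "(\<Prod>i\<in>UNIV. N S $ i $ p i) = (\<Prod>i\<in>UNIV. if i \<in> S then b$(p i) else M$i$(p i))"
        unfolding N_def by (intro prod.cong) auto
      also have "\<dots> = (\<Prod>i\<in>UNIV \<inter> {i. i \<in> S}. b$(p i)) * (\<Prod>i\<in>UNIV \<inter> - {i. i \<in> S}. M$i$(p i))"
        by (rule prod.If_cases) simp
      also have "\<dots> = (\<Prod>i\<in>S. b$(p i)) * (\<Prod>i\<in>UNIV-S. M$i$(p i))"
        by (simp add: Compl_eq_Diff_UNIV)
      finally show ?thesis .
    qed
    then show ?thesis unfolding det_def P_def by simp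
  qed
  have "det ((\<chi> i j. a$i * b$j) - C) =
      (\<Sum>p\<in>P. of_int (sign p) * (\<Prod>i\<in>UNIV. a$i*b$(p i) + M$i$(p i)))"
    unfolding det_def entry P_def ..
  also have "\<dots> = (\<Sum>p\<in>P. of_int (sign p) * (\<Sum>S\<in>Pow UNIV. (\<Prod>i\<in>S. a$i*b$(p i)) * (\<Prod>i\<in>UNIV-S. M$i$(p i))))"
    by (simp add: prod_add)
  also have "\<dots> = (\<Sum>p\<in>P. \<Sum>S\<in>Pow UNIV. of_int (sign p) * ((\<Prod>i\<in>S. a$i*b$(p i)) * (\<Prod>i\<in>UNIV-S. M$i$(p i))))"
    by (simp add: sum_distrib_left)
  also have "\<dots> = (\<Sum>S\<in>Pow UNIV. \<Sum>p\<in>P. of_int (sign p) * ((\<Prod>i\<in>S. a$i*b$(p i)) * (\<Prod>i\<in>UNIV-S. M$i$(p i))))"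
    by (rule sum.swap)
  also have "\<dots> = (\<Sum>S\<in>Pow UNIV. g S)"
  proof (rule sum.cong[OF refl])
    fix S :: "'n set"
    have "(\<Sum>p\<in>P. of_int (sign p) * ((\<Prod>i\<in>S. a$i*b$(p i)) * (\<Prod>i\<in>UNIV-S. M$i$(p i)))) =
        (\<Sum>p\<in>P. (\<Prod>i\<in>S. a$i) * (of_int (sign p) * ((\<Prod>i\<in>S. b$(p i)) * (\<Prod>i\<in>UNIV-S. M$i$(p i)))))"
      by (intro sum.cong refl) (simp add: prod.distrib mult_ac)
    also have "\<dots> = g S" unfolding g_def dN by (simp add: sum_distrib_left)
    finally show "(\<Sum>p\<in>P. of_int (sign p) * ((\<Prod>i\<in>S. a$i*b$(p i)) * (\<Prod>i\<in>UNIV-S. M$i$(p i)))) = g S" .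
  qed
  also have "\<dots> = (\<Sum>S\<in>insert {} (range (\<lambda>k. {k})). g S)"
  proof (rule sum.mono_neutral_right)
    show "finite (Pow (UNIV :: 'n set))" by simp
    show "insert {} (range (\<lambda>k. {k})) \<subseteq> Pow (UNIV :: 'n set)" by auto
    show "\<forall>S\<in>Pow UNIV - insert {} (range (\<lambda>k. {k})). g S = 0"
    proof
      fix S :: "'n set" assume S: "S \<in> Pow UNIV - insert {} (range (\<lambda>k. {k}))"
      then obtain i j where ij: "i \<in> S" "j \<in> S" "i \<noteq> j" by blast
      have "row i (N S) = row j (N S)" unfolding N_def row_def using ij by (simp add: vec_eq_iff)
      then have "det (N S) = 0" by (rule det_identical_rows[OF ij(3)])
      then show "g S = 0" unfolding g_def by simp
    qed
  qed
  also have "\<dots> = g {} + (\<Sum>S\<in>range (\<lambda>k. {k}). g S)"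
    by (rule sum.insert) auto
  also have "(\<Sum>S\<in>range (\<lambda>k. {k}). g S) = (\<Sum>k\<in>UNIV. g {k})"
    by (subst sum.reindex) (auto simp: inj_on_def)
  also have "g {} = det (-C)"
  proof -
    have "N {} = M" unfolding N_def by (simp add: vec_eq_iff)
    then show ?thesis unfolding g_def M_def by simp
  qed
  also have "(\<Sum>k\<in>UNIV. g {k}) = (\<Sum>k\<in>UNIV. \<Sum>p\<in>{p. p permutes UNIV}. of_int (sign p) * (a$k * b$(p k) * (\<Prod>i\<in>UNIV-{k}. - C$i$(p i))))"
  proof (rule sum.cong[OF refl])
    fix k
    show "g {k} = (\<Sum>p\<in>{p. p permutes UNIV}. of_int (sign p) * (a$k * b$(p k) * (\<Prod>i\<in>UNIV-{k}. - C$i$(p i))))"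
      unfolding g_def dN P_def M_def by (simp add: sum_distrib_left mult_ac)
  qed
  finally show ?thesis .
qed



lemma neg1_pow:
  assumes "1 \<le> c" "c \<le> N"
  shows "(-1::'a::comm_ring_1)^(N-c) * (-1)^(N-1) = (-1)^(c-1)"
proof -
  have e: "N - c + (N - 1) = 2 * (N - c) + (c - 1)" using assms by simp
  have "(-1::'a)^(N-c) * (-1)^(N-1) = (-1)^(N - c + (N - 1))" by (simp add: power_add)
  also have "\<dots> = ((-1)^2)^(N-c) * (-1)^(c-1)" unfolding e by (simp add: power_add power_mult)
  also have "\<dots> = (-1)^(c-1)" by simp
  finally show ?thesis .
qed

theorem lemmaA4:
  fixes C :: "'a::comm_ring_1 ^ 'n ^ 'n" and a b :: "'a ^ 'n"
  shows "det ((\<chi> i j. a $ i * b $ j) - C) =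
    det (- C) +
    (\<Sum>(E, s, t) \<in> {(E, s, t). path_cycles_graph E s t}.
        (- 1) ^ num_cycles E * b $ s * a $ t * (\<Prod>(i, j) \<in> E. C $ i $ j))"
proof -
  let ?S = "{(E, s, t). path_cycles_graph E s t} :: (('n \<times> 'n) set \<times> 'n \<times> 'n) set"
  let ?P = "{p. p permutes (UNIV :: 'n set)}"
  define h where "h = (\<lambda>(E, s, t). (- 1) ^ num_cycles E * b $ s * a $ t * (\<Prod>(i, j) \<in> E. C $ i $ j))"
  define \<Phi> where "\<Phi> = (\<lambda>(p :: 'n \<Rightarrow> 'n, k :: 'n). (Eg p k, p k, k))"
  have perm: "permutation p" if "p \<in> ?P" for p
    using that permutes_imp_permutation[of "UNIV :: 'n set" p] by simp
  have inj: "inj_on \<Phi> (?P \<times> UNIV)"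
  proof (rule inj_onI)
    fix x y assume x: "x \<in> ?P \<times> UNIV" and y: "y \<in> ?P \<times> UNIV" and eq: "\<Phi> x = \<Phi> y"
    obtain p k where pk: "x = (p, k)" by force
    obtain p' k' where pk': "y = (p', k')" by force
    have e: "Eg p k = Eg p' k'" "p k = p' k'" "k = k'" using eq pk pk' \<Phi>_def by auto
    have "p i = p' i" for i
    proof (cases "i = k")
      case True then show ?thesis using e by simp
    next
      case False
      then have "(i, p i) \<in> Eg p' k'" using e(1) unfolding Eg_def by auto
      then show ?thesis unfolding Eg_def by auto
    qed
    then show "x = y" using pk pk' e by auto
  qed
  have img: "\<Phi> ` (?P \<times> UNIV) = ?S"
  proof
    show "\<Phi> ` (?P \<times> UNIV) \<subseteq> ?S"
      using pcg_Eg(1)[OF perm] unfolding \<Phi>_def by auto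
    show "?S \<subseteq> \<Phi> ` (?P \<times> UNIV)"
    proof
      fix x assume "x \<in> ?S"
      obtain E s t where x1: "x = (E, s, t)" by (cases x) blast
      have x: "x = (E, s, t)" "path_cycles_graph E s t" using x1 \<open>x \<in> ?S\<close> by simp_all
      obtain f where f: "f permutes UNIV" "E = {(i, f i) | i. i \<noteq> t}" "s = f t"
        using pcg_surj[OF x(2)] by blast
      have "x = \<Phi> (f, t)" unfolding \<Phi>_def x Eg_def using f by simp
      then show "x \<in> \<Phi> ` (?P \<times> UNIV)" using f by auto
    qed
  qed
  have pt: "h (\<Phi> (p, k)) = of_int (sign p) * (a$k * b$(p k) * (\<Prod>i\<in>UNIV-{k}. - C$i$(p i)))"
    if p: "p \<in> ?P" for p k
  proof -
    define c where "c = card (range (cls p))"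
    define N where "N = CARD('n)"
    have c1: "1 \<le> c" unfolding c_def by (simp add: Suc_leI card_gt_0_iff)
    have cN: "c \<le> N" unfolding c_def N_def by (rule card_range_cls_le)
    have sg: "of_int (sign p) = ((-1::'a) ^ (N - c))"
      using sign_cls[OF perm[OF p]] unfolding c_def N_def by simp
    have egi: "Eg p k = (\<lambda>i. (i, p i)) ` (UNIV - {k})" unfolding Eg_def by auto
    have pr: "(\<Prod>(i, j) \<in> Eg p k. C $ i $ j) = (\<Prod>i\<in>UNIV-{k}. C$i$(p i))"
      unfolding egi by (subst prod.reindex) (auto simp: inj_on_def)
    have pm: "(\<Prod>i\<in>UNIV-{k}. - C$i$(p i)) = (-1)^(N-1) * (\<Prod>i\<in>UNIV-{k}. C$i$(p i))"
    proof -
      have "(\<Prod>i\<in>UNIV-{k}. - C$i$(p i)) = (\<Prod>i\<in>UNIV-{k}. (-1) * C$i$(p i))" by simp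
      also have "\<dots> = (\<Prod>i\<in>UNIV-{k}. (-1::'a)) * (\<Prod>i\<in>UNIV-{k}. C$i$(p i))"
        by (rule prod.distrib)
      also have "(\<Prod>i\<in>UNIV-{k}. (-1::'a)) = (-1)^(N-1)" unfolding N_def
        by (simp add: card_Diff_singleton)
      finally show ?thesis .
    qed
    have nc: "num_cycles (Eg p k) = c - 1" using pcg_Eg(2)[OF perm[OF p]] c_def by simp
    have "h (\<Phi> (p, k)) = (-1)^(c-1) * b$(p k) * a$k * (\<Prod>i\<in>UNIV-{k}. C$i$(p i))"
      unfolding h_def \<Phi>_def by (simp add: nc pr)
    also have "\<dots> = ((-1::'a) ^ (N - c) * (-1)^(N-1)) * (a$k * b$(p k) * (\<Prod>i\<in>UNIV-{k}. C$i$(p i)))"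
      unfolding neg1_pow[OF c1 cN] by (simp add: mult_ac)
    also have "\<dots> = of_int (sign p) * (a$k * b$(p k) * (\<Prod>i\<in>UNIV-{k}. - C$i$(p i)))"
      unfolding sg pm by (simp add: mult_ac)
    finally show ?thesis .
  qed
  have "(\<Sum>x\<in>?S. h x) = (\<Sum>x\<in>?P \<times> UNIV. h (\<Phi> x))"
    unfolding img[symmetric] by (subst sum.reindex[OF inj]) simp
  also have "\<dots> = (\<Sum>(p, k)\<in>?P \<times> UNIV. h (\<Phi> (p, k)))" by simp
  also have "\<dots> = (\<Sum>p\<in>?P. \<Sum>k\<in>UNIV. h (\<Phi> (p, k)))"
    by (rule sum.cartesian_product[symmetric])
  also have "\<dots> = (\<Sum>k\<in>UNIV. \<Sum>p\<in>?P. h (\<Phi> (p, k)))" by (rule sum.swap)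
  also have "\<dots> = (\<Sum>k\<in>UNIV. \<Sum>p\<in>?P. of_int (sign p) * (a$k * b$(p k) * (\<Prod>i\<in>UNIV-{k}. - C$i$(p i))))"
    using pt by (intro sum.cong refl) simp
  finally have main: "(\<Sum>x\<in>?S. h x) = \<dots>" .
  show ?thesis using det_expand[of a b C] main unfolding h_def by simp
qed


end
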